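(* Let $C$ be a non-empty clique of $G$. Then the problem $\max\{f(\mathbf{x}):\mathbf{x}\in\Delta(C)\}$ has a unique local maximizer, which is therefore its unique global maximizer, and this maximizer is $\mathbf{x}(C)$.
   Context: Let $G=(\mathcal{V},\mathcal{E})$ be a simple undirected graph on vertex set $\mathcal{V}=\{1,\dots,n\}$ with adjacency matrix $\mathbf{A}=(a_{ij})$ ($a_{ij}=1$ if $(i,j)\in\mathcal{E}$, else $0$; $a_{ii}=0$). A clique is a subset $C\subseteq\mathcal{V}$ with $(i,j)\in\mathcal{E}$ for all distinct $i,j\in C$. Let $\Delta=\{\mathbf{x}\in\mathbb{R}^n:\mathbf{0}\le\mathbf{x}\le\mathbf{1},\ \mathbf{1}^{\mathsf T}\mathbf{x}=1\}$, $\mathrm{supp}(\mathbf{x})=\{i:x_i\neq0\}$, and for a clique $C$, $\Delta(C)=\{\mathbf{x}\in\Delta:\mathrm{supp}(\mathbf{x})\subseteq C\}$. For a non-empty $C$, the characteristic vector $\mathbf{x}(C)\in\Delta$ has $x(C)_i=1/|C|$ for $i\in C$ and $0$ otherwise. For $\mathbf{x}\in\Delta$, $\mathcal{P}(\mathbf{x})$ is the set of vectors in $\Delta$ obtained by permuting the coordinates of $\mathbf{x}$. Let $\Phi:X\to\mathbb{R}$ be twice continuously differentiable on an open set $X\supset\Delta$, satisfying for every $\mathbf{x}\in\Delta$: (C1) $\nabla^2\Phi(\mathbf{x})$ is positive semidefinite; (C2) $\|\nabla^2\Phi(\mathbf{x})\|_2<2$; (C3) $\Phi$ is constant on $\mathcal{P}(\mathbf{x})$.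 Define $f(\mathbf{x})=\mathbf{x}^{\mathsf T}\mathbf{A}\mathbf{x}+\Phi(\mathbf{x})$. A point $\mathbf{x}$ of a set $Y$ is a local maximizer of $\max\{f:Y\}$ if $f(\mathbf{x})\ge f(\tilde{\mathbf{x}})$ for all $\tilde{\mathbf{x}}\in Y$ in some neighborhood of $\mathbf{x}$. *)

theory Defs
  imports "HOL-Analysis.Analysis"
begin

text \<open>Vertices are the elements of a finite type 'n (playing the role of {1..n});
  vectors are real^'n, the adjacency matrix is real^'n^'n.\<close>

definition simple_adjacency :: "real^'n^'n \<Rightarrow> bool" where
  "simple_adjacency A \<longleftrightarrow>
     (\<forall>i j. A$i$j = 0 \<or> A$i$j = 1) \<and> (\<forall>i j. A$i$j = A$j$i) \<and> (\<forall>i. A$i$i = 0)"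

definition is_clique :: "real^'n^'n \<Rightarrow> 'n set \<Rightarrow> bool" where
  "is_clique A C \<longleftrightarrow> (\<forall>i\<in>C. \<forall>j\<in>C. i \<noteq> j \<longrightarrow> A$i$j = 1)"

definition Delta_set :: "(real^'n) set" where
  "Delta_set = {x. (\<forall>i. 0 \<le> x$i \<and> x$i \<le> 1) \<and> (\<Sum>i\<in>UNIV. x$i) = 1}"

definition supp :: "real^'n \<Rightarrow> 'n set" where
  "supp x = {i. x$i \<noteq> 0}"

definition face :: "'n set \<Rightarrow> (real^'n) set" where
  "face C = {x \<in> Delta_set. supp x \<subseteq> C}"

definition charvec :: "'n set \<Rightarrow> real^'n" where
  "charvec C = (\<chi> i. if i \<in> C then 1 / real (card C) else 0)"

definition permutations_of :: "real^'n \<Rightarrow> (real^'n) set" where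
  "permutations_of x = {y \<in> Delta_set. \<exists>p. p permutes (UNIV::'n set) \<and> y = (\<chi> i. x$(p i))}"

definition local_maximizer :: "(real^'n \<Rightarrow> real) \<Rightarrow> (real^'n) set \<Rightarrow> real^'n \<Rightarrow> bool" where
  "local_maximizer f Y x \<longleftrightarrow> x \<in> Y \<and> (\<exists>e>0. \<forall>y\<in>Y. dist y x < e \<longrightarrow> f y \<le> f x)"

definition global_maximizer :: "(real^'n \<Rightarrow> real) \<Rightarrow> (real^'n) set \<Rightarrow> real^'n \<Rightarrow> bool" where
  "global_maximizer f Y x \<longleftrightarrow> x \<in> Y \<and> (\<forall>y\<in>Y. f y \<le> f x)"

end

theory Submission
  imports Defs
begin


lemma strict_conc:
  fixes \<Phi> :: "real^'n \<Rightarrow> real" and g :: "real^'n \<Rightarrow> real^'n" and H :: "real^'n \<Rightarrow> real^'n^'n"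
    and z d :: "real^'n"
  assumes sub: "\<And>s. 0 \<le> s \<Longrightarrow> s \<le> 1 \<Longrightarrow> z + s *\<^sub>R d \<in> X"
    and hb: "\<And>s. 0 \<le> s \<Longrightarrow> s \<le> 1 \<Longrightarrow> (H (z + s *\<^sub>R d) *v d) \<bullet> d < 2 * (d \<bullet> d)"
    and D1: "\<And>x. x \<in> X \<Longrightarrow> (\<Phi> has_derivative (\<lambda>h. g x \<bullet> h)) (at x)"
    and D2: "\<And>x. x \<in> X \<Longrightarrow> (g has_derivative (\<lambda>h. H x *v h)) (at x)"
    and t: "0 < t" "t < 1"
  defines "G \<equiv> \<lambda>s. 1 - (z + s *\<^sub>R d) \<bullet> (z + s *\<^sub>R d) + \<Phi> (z + s *\<^sub>R d)"
  shows "G t > (1 - t) * G 0 + t * G 1"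
proof -
  define \<gamma> where "\<gamma> s = z + s *\<^sub>R d" for s :: real
  have d\<gamma>: "(\<gamma> has_derivative (\<lambda>h. h *\<^sub>R d)) (at s)" for s
    unfolding \<gamma>_def by (auto intro!: derivative_eq_intros)
  define G1 where "G1 s = - 2 * (\<gamma> s \<bullet> d) + g (\<gamma> s) \<bullet> d" for s
  have dG: "(G has_real_derivative G1 s) (at s)" if "0 \<le> s" "s \<le> 1" for s
  proof -
    have X1: "\<gamma> s \<in> X" using sub that by (simp add: \<gamma>_def)
    have c: "((\<lambda>s. \<Phi> (\<gamma> s)) has_derivative (\<lambda>h. g (\<gamma> s) \<bullet> (h *\<^sub>R d))) (at s)"
      by (rule has_derivative_compose[OF d\<gamma> D1[OF X1]])
    have e: "G = (\<lambda>s. 1 - \<gamma> s \<bullet> \<gamma> s + \<Phi> (\<gamma> s))" unfolding G_def \<gamma>_def by simp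
    have "(G has_derivative (\<lambda>h. 0 - (\<gamma> s \<bullet> h *\<^sub>R d + h *\<^sub>R d \<bullet> \<gamma> s) + g (\<gamma> s) \<bullet> (h *\<^sub>R d))) (at s)"
      unfolding e
      by (intro has_derivative_add has_derivative_diff has_derivative_const c has_derivative_inner d\<gamma>)
    moreover have "(\<lambda>h. 0 - (\<gamma> s \<bullet> h *\<^sub>R d + h *\<^sub>R d \<bullet> \<gamma> s) + g (\<gamma> s) \<bullet> (h *\<^sub>R d)) = (*) (G1 s)"
      by (auto simp: G1_def inner_commute algebra_simps)
    ultimately show ?thesis by (simp add: has_field_derivative_def)
  qed
  have dG1: "\<exists>y. (G1 has_real_derivative y) (at s) \<and> y < 0" if "0 \<le> s" "s \<le> 1" for s
  proof -
    have X1: "\<gamma> s \<in> X" using sub that by (simp add: \<gamma>_def)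
    have c: "((\<lambda>s. g (\<gamma> s)) has_derivative (\<lambda>h. H (\<gamma> s) *v (h *\<^sub>R d))) (at s)"
      by (rule has_derivative_compose[OF d\<gamma> D2[OF X1]])
    have "(G1 has_derivative (\<lambda>h. - 2 * (h *\<^sub>R d \<bullet> d) + (H (\<gamma> s) *v (h *\<^sub>R d)) \<bullet> d)) (at s)"
      unfolding G1_def[abs_def]
      by (intro has_derivative_add has_derivative_mult_right has_derivative_inner_left c d\<gamma>)
    moreover have "(\<lambda>h. - 2 * (h *\<^sub>R d \<bullet> d) + (H (\<gamma> s) *v (h *\<^sub>R d)) \<bullet> d)
        = (*) (- 2 * (d \<bullet> d) + (H (\<gamma> s) *v d) \<bullet> d)"
      by (auto simp: matrix_vector_mult_scaleR algebra_simps)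
    ultimately have "(G1 has_real_derivative (- 2 * (d \<bullet> d) + (H (\<gamma> s) *v d) \<bullet> d)) (at s)"
      by (simp add: has_field_derivative_def)
    moreover have "- 2 * (d \<bullet> d) + (H (\<gamma> s) *v d) \<bullet> d < 0" using hb[OF that] by (simp add: \<gamma>_def)
    ultimately show ?thesis by blast
  qed
  obtain a where a: "0 < a" "a < t" "G t - G 0 = (t - 0) * G1 a"
    using MVT2[of 0 t G G1] dG t by auto
  obtain b where b: "t < b" "b < 1" "G 1 - G t = (1 - t) * G1 b"
    using MVT2[of t 1 G G1] dG t by auto
  have "G1 b < G1 a"
    by (rule DERIV_neg_imp_decreasing) (use a b dG1 in auto)
  hence "t * (1 - t) * G1 b < t * (1 - t) * G1 a" using t by simp
  moreover have e1: "G 1 = G 0 + t * G1 a + (1 - t) * G1 b" and e2: "G t = G 0 + t * G1 a" using a(3) b(3) by simp_all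
  have "G t - ((1 - t) * G 0 + t * G 1) = t * (1 - t) * G1 a - t * (1 - t) * G1 b"
    unfolding e1 e2 by (simp add: algebra_simps)
  ultimately show ?thesis by linarith
qed

lemma quad_face:
  fixes A :: "real^'n^'n"
  assumes A: "simple_adjacency A" and C: "is_clique A C" and v: "v \<in> face C"
  shows "v \<bullet> (A *v v) = 1 - v \<bullet> v"
proof -
  have vC: "\<And>i. i \<notin> C \<Longrightarrow> v$i = 0" using v by (auto simp: face_def supp_def)
  have s1: "(\<Sum>i\<in>UNIV. v$i) = 1" using v by (auto simp: face_def Delta_set_def)
  have tm: "v$i * (A$i$j * v$j) = v$i * v$j - (if i = j then v$i * v$j else 0)" for i j
  proof (cases "i \<in> C \<and> j \<in> C")
    case True
    then show ?thesis using A C by (auto simp: simple_adjacency_def is_clique_def)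
  next
    case False
    then show ?thesis using vC by auto
  qed
  have "v \<bullet> (A *v v) = (\<Sum>i\<in>UNIV. \<Sum>j\<in>UNIV. v$i * (A$i$j * v$j))"
    by (simp add: inner_vec_def matrix_vector_mult_def sum_distrib_left)
  also have "\<dots> = (\<Sum>i\<in>UNIV. \<Sum>j\<in>UNIV. v$i * v$j) - (\<Sum>i\<in>UNIV. v$i * v$i)"
    by (simp add: tm sum_subtractf)
  also have "(\<Sum>i\<in>UNIV. \<Sum>j\<in>UNIV. v$i * v$j) = (\<Sum>i\<in>UNIV. v$i) * (\<Sum>j\<in>UNIV. v$j)"
    by (simp add: sum_product)
  finally show ?thesis using s1 by (simp add: inner_vec_def)
qed

lemma face_seg:
  assumes z: "z \<in> face C" and y: "y \<in> face C" and s: "0 \<le> s" "s \<le> 1"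
  shows "z + s *\<^sub>R (y - z) \<in> face C"
proof -
  have e: "z + s *\<^sub>R (y - z) = (1 - s) *\<^sub>R z + s *\<^sub>R y" by (simp add: algebra_simps)
  have b: "0 \<le> (1 - s) * z$i + s * y$i \<and> (1 - s) * z$i + s * y$i \<le> 1" for i
  proof -
    have "0 \<le> z$i" "z$i \<le> 1" "0 \<le> y$i" "y$i \<le> 1" using z y by (auto simp: face_def Delta_set_def)
    moreover have "(1 - s) * z$i \<le> (1 - s) * 1" "s * y$i \<le> s * 1"
      using calculation s by (intro mult_left_mono; simp)+
    ultimately show ?thesis using s by simp
  qed
  have "(\<Sum>i\<in>UNIV. (1 - s) * z$i + s * y$i) = (1 - s) * (\<Sum>i\<in>UNIV. z$i) + s * (\<Sum>i\<in>UNIV. y$i)"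
    by (simp add: sum.distrib sum_distrib_left)
  also have "\<dots> = 1" using z y by (simp add: face_def Delta_set_def)
  finally have "(\<Sum>i\<in>UNIV. (1 - s) * z$i + s * y$i) = 1" .
  moreover have "\<forall>i. i \<notin> C \<longrightarrow> z$i = 0 \<and> y$i = 0" using z y by (auto simp: face_def supp_def)
  hence "supp ((1 - s) *\<^sub>R z + s *\<^sub>R y) \<subseteq> C" by (auto simp: supp_def)
  ultimately show ?thesis unfolding e using b by (simp add: face_def Delta_set_def)
qed

lemma hbound:
  fixes H :: "real^'n^'n"
  assumes "onorm (\<lambda>v. H *v v) < 2" "d \<noteq> 0"
  shows "(H *v d) \<bullet> d < 2 * (d \<bullet> d)"
proof -
  have "(H *v d) \<bullet> d \<le> norm (H *v d) * norm d" by (rule norm_cauchy_schwarz)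
  also have "\<dots> \<le> onorm (\<lambda>v. H *v v) * norm d * norm d"
    using onorm[OF matrix_vector_mul_bounded_linear[of H], of d] by (simp add: mult_right_mono)
  also have "\<dots> < 2 * norm d * norm d"
    using assms by (intro mult_strict_right_mono) auto
  also have "\<dots> = 2 * (d \<bullet> d)" by (simp add: power2_norm_eq_inner[symmetric] power2_eq_square)
  finally show ?thesis .
qed

lemma lm_cong:
  assumes "\<And>x. x \<in> Y \<Longrightarrow> f x = h x"
  shows "local_maximizer f Y = local_maximizer h Y" "global_maximizer f Y = global_maximizer h Y"
  using assms by (auto simp: local_maximizer_def global_maximizer_def fun_eq_iff)

lemma face_compact: "compact (face C)"
proof (subst compact_eq_bounded_closed, intro conjI)
  show "bounded (face C)"
    unfolding bounded_iff
  proof (intro exI ballI)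
    fix x :: "real^'a" assume x: "x \<in> face C"
    have "norm x \<le> (\<Sum>i\<in>UNIV. \<bar>x$i\<bar>)" by (rule norm_le_l1_cart)
    also have "\<dots> = (\<Sum>i\<in>UNIV. x$i)" using x by (auto simp: face_def Delta_set_def intro!: sum.cong)
    also have "\<dots> = 1" using x by (auto simp: face_def Delta_set_def)
    finally show "norm x \<le> 1" .
  qed
  have e: "face C = {x. \<forall>i. 0 \<le> x$i \<and> x$i \<le> 1 \<and> (i \<notin> C \<longrightarrow> x$i = 0)} \<inter> {x. (\<Sum>i\<in>UNIV. x$i) = 1}"
    by (auto simp: face_def Delta_set_def supp_def)
  show "closed (face C)" unfolding e
    by (intro closed_Inter closed_Int closed_Collect_all closed_Collect_conj closed_Collect_imp
        closed_Collect_le closed_Collect_eq open_Collect_const continuous_intros)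
qed


lemma key:
  fixes \<Phi> :: "real^'n \<Rightarrow> real" and g :: "real^'n \<Rightarrow> real^'n" and H :: "real^'n \<Rightarrow> real^'n^'n"
  assumes X: "Delta_set \<subseteq> X"
    and D1: "\<And>x. x \<in> X \<Longrightarrow> (\<Phi> has_derivative (\<lambda>h. g x \<bullet> h)) (at x)"
    and D2: "\<And>x. x \<in> X \<Longrightarrow> (g has_derivative (\<lambda>h. H x *v h)) (at x)"
    and C2: "\<And>x. x \<in> Delta_set \<Longrightarrow> onorm (\<lambda>v. H x *v v) < 2"
    and lm: "local_maximizer (\<lambda>v. 1 - v \<bullet> v + \<Phi> v) (face C) z"
    and y: "y \<in> face C" "y \<noteq> z"
  shows "1 - y \<bullet> y + \<Phi> y < 1 - z \<bullet> z + \<Phi> z"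
proof (rule ccontr)
  define Q where "Q v = 1 - v \<bullet> v + \<Phi> v" for v
  assume "\<not> ?thesis"
  hence ge: "Q z \<le> Q y" by (simp add: Q_def)
  from lm obtain e where e: "e > 0" and z: "z \<in> face C"
    and loc: "\<And>w. w \<in> face C \<Longrightarrow> dist w z < e \<Longrightarrow> Q w \<le> Q z"
    unfolding local_maximizer_def Q_def by blast
  define d where "d = y - z"
  have dn: "d \<noteq> 0" using y by (simp add: d_def)
  hence nd: "norm d > 0" by simp
  define t where "t = min (1/2) (e / (2 * norm d))"
  have t: "0 < t" "t < 1" using e nd by (auto simp: t_def)
  have seg: "z + s *\<^sub>R d \<in> face C" if "0 \<le> s" "s \<le> 1" for s
    unfolding d_def by (rule face_seg[OF z y(1) that])
  have fD: "face C \<subseteq> Delta_set" by (auto simp: face_def)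
  have sc: "Q (z + t *\<^sub>R d) > (1 - t) * Q (z + 0 *\<^sub>R d) + t * Q (z + 1 *\<^sub>R d)"
    unfolding Q_def
  proof (rule strict_conc[where X = X and H = H and g = g, OF _ _ D1 D2 t])
    fix s :: real assume s: "0 \<le> s" "s \<le> 1"
    show "z + s *\<^sub>R d \<in> X" using seg[OF s] fD X by blast
    show "(H (z + s *\<^sub>R d) *v d) \<bullet> d < 2 * (d \<bullet> d)"
      using hbound[OF C2 dn] seg[OF s] fD by blast
  qed auto
  have "z + 1 *\<^sub>R d = y" by (simp add: d_def)
  hence "Q (z + t *\<^sub>R d) > (1 - t) * Q z + t * Q y" using sc by simp
  moreover have "(1 - t) * Q z + t * Q y \<ge> (1 - t) * Q z + t * Q z"
    using ge t by (intro add_left_mono mult_left_mono) auto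
  ultimately have gt: "Q (z + t *\<^sub>R d) > Q z" by (simp add: algebra_simps)
  have "dist (z + t *\<^sub>R d) z = t * norm d" using t by (simp add: dist_norm)
  also have "\<dots> \<le> (e / (2 * norm d)) * norm d" using nd by (intro mult_right_mono) (auto simp: t_def)
  also have "\<dots> < e" using nd e by (simp add: field_simps)
  finally have "Q (z + t *\<^sub>R d) \<le> Q z" using loc seg t by auto
  with gt show False by simp
qed

theorem proposition1:
  fixes A :: "real^'n^'n" and \<Phi> :: "real^'n \<Rightarrow> real"
    and g :: "real^'n \<Rightarrow> real^'n" and H :: "real^'n \<Rightarrow> real^'n^'n"
    and X :: "(real^'n) set" and C :: "'n set"
  assumes A: "simple_adjacency A"
    and X: "open X" "Delta_set \<subseteq> X"
    and D1: "\<And>x. x \<in> X \<Longrightarrow> (\<Phi> has_derivative (\<lambda>h. g x \<bullet> h)) (at x)"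
    and D2: "\<And>x. x \<in> X \<Longrightarrow> (g has_derivative (\<lambda>h. H x *v h)) (at x)"
    and D2c: "continuous_on X H"
    and C1: "\<And>x v. x \<in> Delta_set \<Longrightarrow> 0 \<le> v \<bullet> (H x *v v)"
    and C2: "\<And>x. x \<in> Delta_set \<Longrightarrow> onorm (\<lambda>v. H x *v v) < 2"
    and C3: "\<And>x y. x \<in> Delta_set \<Longrightarrow> y \<in> permutations_of x \<Longrightarrow> \<Phi> y = \<Phi> x"
    and C: "is_clique A C" "C \<noteq> {}"
  shows "{x. local_maximizer (\<lambda>x. x \<bullet> (A *v x) + \<Phi> x) (face C) x} = {charvec C}
       \<and> {x. global_maximizer (\<lambda>x. x \<bullet> (A *v x) + \<Phi> x) (face C) x} = {charvec C}"
proof -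
  define Q where "Q v = 1 - v \<bullet> v + \<Phi> v" for v
  define F where "F x = x \<bullet> (A *v x) + \<Phi> x" for x
  have FQ: "\<And>x. x \<in> face C \<Longrightarrow> F x = Q x"
    using quad_face[OF A C(1)] by (simp add: F_def Q_def)
  have fD: "face C \<subseteq> Delta_set" by (auto simp: face_def)
  have keyQ: "Q y < Q z" if "local_maximizer Q (face C) z" "y \<in> face C" "y \<noteq> z" for y z
    using key[OF X(2) D1 D2 C2, of C z y] that unfolding Q_def[abs_def] by blast
  have glm: "local_maximizer Q (face C) z" if "global_maximizer Q (face C) z" for z
    using that unfolding global_maximizer_def local_maximizer_def by (auto intro: exI[of _ 1])
  have finC: "finite C" by simp
  have cpos: "card C \<ge> 1" using C(2) finC by (simp add: Suc_le_eq card_gt_0_iff)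
  have cv: "charvec C \<in> face C"
  proof -
    have "(\<Sum>i\<in>UNIV. (charvec C)$i) = (\<Sum>i\<in>C. 1 / real (card C))"
      unfolding charvec_def by (simp add: sum.If_cases)
    also have "\<dots> = 1" using cpos C(2) by simp
    finally show ?thesis using cpos
      by (auto simp: face_def Delta_set_def supp_def charvec_def split: if_splits)
  qed
  have contQ: "continuous_on (face C) Q"
  proof -
    have "continuous_on (face C) \<Phi>"
      by (rule continuous_at_imp_continuous_on)
        (use fD X(2) D1 has_derivative_continuous in blast)
    thus ?thesis unfolding Q_def[abs_def] by (intro continuous_intros)
  qed
  obtain z0 where z0: "z0 \<in> face C" "\<And>y. y \<in> face C \<Longrightarrow> Q y \<le> Q z0"
    using continuous_attains_sup[OF face_compact _ contQ] cv by blast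
  have gz0: "global_maximizer Q (face C) z0" using z0 by (simp add: global_maximizer_def)
  have sym: "z0$j = z0$i" if ij: "i \<in> C" "j \<in> C" for i j
  proof -
    define p where "p = Transposition.transpose i j"
    have pp: "p permutes (UNIV :: 'n set)" unfolding p_def by (rule permutes_swap_id) auto
    define y where "y = (\<chi> k. z0$(p k))"
    have z0D: "z0 \<in> Delta_set" using z0 fD by blast
    have "(\<Sum>k\<in>UNIV. y$k) = (\<Sum>k\<in>UNIV. z0$k)"
      using sum.permute[OF pp, of "\<lambda>k. z0$k"] by (simp add: y_def o_def)
    hence yD: "y \<in> Delta_set" using z0D by (auto simp: Delta_set_def y_def)
    have "supp y \<subseteq> C"
    proof
      fix k assume "k \<in> supp y"
      hence "z0$(p k) \<noteq> 0" by (simp add: supp_def y_def)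
      hence "p k \<in> C" using z0 by (auto simp: face_def supp_def)
      thus "k \<in> C" using ij by (auto simp: p_def Transposition.transpose_def split: if_splits)
    qed
    hence yF: "y \<in> face C" using yD by (simp add: face_def)
    have "y \<in> permutations_of z0" using yD pp unfolding permutations_of_def y_def by blast
    hence phi: "\<Phi> y = \<Phi> z0" using C3 z0D by blast
    have "y \<bullet> y = z0 \<bullet> z0"
      using sum.permute[OF pp, of "\<lambda>k. z0$k * z0$k"] by (simp add: y_def o_def inner_vec_def)
    hence "Q y = Q z0" using phi by (simp add: Q_def)
    hence "y = z0" using keyQ[OF glm[OF gz0] yF] by fastforce
    hence "y$i = z0$i" by simp
    thus ?thesis by (simp add: y_def p_def)
  qed
  have z0c: "z0 = charvec C"
  proof -
    obtain c where c: "c \<in> C" using C(2) by blast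
    have out: "z0$i = 0" if "i \<notin> C" for i using z0(1) that by (auto simp: face_def supp_def)
    have "1 = (\<Sum>i\<in>UNIV. z0$i)" using z0(1) by (simp add: face_def Delta_set_def)
    also have "\<dots> = (\<Sum>i\<in>UNIV. if i \<in> C then z0$c else 0)"
      by (rule sum.cong) (auto simp: out sym[OF c])
    also have "\<dots> = real (card C) * z0$c" by (simp add: sum.If_cases)
    finally have h: "real (card C) * z0$c = 1" by simp
    have "real (card C) \<noteq> 0" using cpos C(2) by simp
    hence "z0$c = 1 / real (card C)" using h by (simp add: eq_divide_eq mult.commute)
    thus ?thesis unfolding charvec_def vec_eq_iff using out sym[OF c] by auto
  qed
  have L: "local_maximizer Q (face C) z \<longleftrightarrow> z = charvec C" for z
  proof
    assume lz: "local_maximizer Q (face C) z"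
    show "z = charvec C"
    proof (rule ccontr)
      assume "z \<noteq> charvec C"
      hence "Q (charvec C) < Q z" using keyQ[OF lz cv] by simp
      moreover have "z \<in> face C" using lz by (simp add: local_maximizer_def)
      ultimately show False using z0(2) z0c by fastforce
    qed
  next
    assume "z = charvec C" thus "local_maximizer Q (face C) z" using glm[OF gz0] z0c by simp
  qed
  have G: "global_maximizer Q (face C) z \<longleftrightarrow> z = charvec C" for z
    using L glm gz0 z0c by blast
  have e1: "local_maximizer (\<lambda>x. x \<bullet> (A *v x) + \<Phi> x) (face C) = local_maximizer Q (face C)"
    using lm_cong(1)[of "face C" F Q] FQ by (simp add: F_def[abs_def])
  have e2: "global_maximizer (\<lambda>x. x \<bullet> (A *v x) + \<Phi> x) (face C) = global_maximizer Q (face C)"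
    using lm_cong(2)[of "face C" F Q] FQ by (simp add: F_def[abs_def])
  show ?thesis unfolding e1 e2 using L G by auto
qed

end
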